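(* The $\mathbb{F}$-dual of every $A$-code (of every length) is an $A$-code if and only if either $m=1$, or $m=2$ and $f(x)=x^2+ax-1$ for some $a\in\mathbb{F}$, or $m\ge2$ and $f(x)=x^m\pm1$.
   Context: Let $\mathbb{F}$ be a finite field, $f(x)\in\mathbb{F}[x]$ monic of degree $m$, $A=\mathbb{F}[x]/\langle f(x)\rangle$, elements identified with polynomials of degree $<m$. An $A$-code of length $l$ is an $A$-submodule of $A^l$. Identify $g(x)=\sum_{i=0}^{m-1}a_ix^i\in A$ with the vector $(a_0,\ldots,a_{m-1})\in\mathbb{F}^m$, and $(g_1,\ldots,g_l)\in A^l$ with the concatenation of the vectors of $g_1,\ldots,g_l$ in $\mathbb{F}^{lm}$. Under this identification an $A$-code $C$ is an $\mathbb{F}$-linear code of length $lm$, and its $\mathbb{F}$-dual $C^{\perp_{\mathbb{F}}}$ is its dual with respect to the standard dot product on $\mathbb{F}^{lm}$, viewed again as a subset of $A^l$; it is an $A$-code if it is an $A$-submodule of $A^l$. *)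

theory Defs
  imports "HOL-Computational_Algebra.Polynomial"
begin

text \<open>A = F[x]/<f>, elements identified with polynomials of degree < m = degree f
  (together with 0).\<close>

definition A_elems :: "'a::field poly \<Rightarrow> 'a poly set" where
  "A_elems f = {p. p = 0 \<or> degree p < degree f}"

definition A_vecs :: "'a::field poly \<Rightarrow> nat \<Rightarrow> (nat \<Rightarrow> 'a poly) set" where
  "A_vecs f l = {v. (\<forall>i<l. v i \<in> A_elems f) \<and> (\<forall>i\<ge>l. v i = 0)}"

definition A_smult :: "'a::field poly \<Rightarrow> 'a poly \<Rightarrow> (nat \<Rightarrow> 'a poly) \<Rightarrow> (nat \<Rightarrow> 'a poly)" where
  "A_smult f a v = (\<lambda>i. (a * v i) mod f)"

definition A_code :: "'a::field poly \<Rightarrow> nat \<Rightarrow> (nat \<Rightarrow> 'a poly) set \<Rightarrow> bool" where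
  "A_code f l C \<longleftrightarrow> C \<subseteq> A_vecs f l \<and> (\<lambda>i. 0) \<in> C \<and>
     (\<forall>u\<in>C. \<forall>v\<in>C. (\<lambda>i. u i + v i) \<in> C) \<and>
     (\<forall>a\<in>A_elems f. \<forall>v\<in>C. A_smult f a v \<in> C)"

text \<open>Standard dot product on F^{lm} under the coefficient identification.\<close>
definition F_dot :: "'a::field poly \<Rightarrow> nat \<Rightarrow> (nat \<Rightarrow> 'a poly) \<Rightarrow> (nat \<Rightarrow> 'a poly) \<Rightarrow> 'a" where
  "F_dot f l u v = (\<Sum>i<l. \<Sum>j<degree f. coeff (u i) j * coeff (v i) j)"

definition F_dual :: "'a::field poly \<Rightarrow> nat \<Rightarrow> (nat \<Rightarrow> 'a poly) set \<Rightarrow> (nat \<Rightarrow> 'a poly) set" where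
  "F_dual f l C = {v \<in> A_vecs f l. \<forall>c\<in>C. F_dot f l v c = 0}"

end

theory Submission imports Defs begin

definition dot :: "nat \<Rightarrow> 'a::field poly \<Rightarrow> 'a poly \<Rightarrow> 'a" where
  "dot m p q = (\<Sum>j<m. coeff p j * coeff q j)"

lemma F_dot_dot: "F_dot f l u v = (\<Sum>i<l. dot (degree f) (u i) (v i))"
  by (simp add: F_dot_def dot_def)

lemma dot_add_left: "dot m (p + q) r = dot m p r + dot m q r"
  by (simp add: dot_def distrib_right sum.distrib)
lemma dot_add_right: "dot m r (p + q) = dot m r p + dot m r q"
  by (simp add: dot_def distrib_left sum.distrib)
lemma dot_smult_left: "dot m (smult c p) r = c * dot m p r"
  by (simp add: dot_def sum_distrib_left mult.assoc)
lemma dot_smult_right: "dot m r (smult c p) = c * dot m r p"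
  by (simp add: dot_def sum_distrib_left algebra_simps)
lemma dot_0_left[simp]: "dot m 0 r = 0" by (simp add: dot_def)
lemma dot_0_right[simp]: "dot m r 0 = 0" by (simp add: dot_def)
lemma dot_comm: "dot m p q = dot m q p" by (simp add: dot_def mult.commute)
lemma dot_monom_left: "dot m (monom 1 i) q = coeff q i" if "i < m"
  proof -
  have "(\<Sum>j<m. coeff (monom 1 i) j * coeff q j) = (\<Sum>j<m. if j = i then coeff q j else 0)"
    by (intro sum.cong) (auto simp: coeff_monom)
  then show ?thesis using that by (simp add: dot_def)
qed
lemma dot_monom_right: "i < m \<Longrightarrow> dot m q (monom 1 i) = coeff q i"
  using dot_monom_left dot_comm by metis

lemma A_iff: "degree f = m \<Longrightarrow> m \<ge> 1 \<Longrightarrow> (p \<in> A_elems f) = (\<forall>k\<ge>m. coeff p k = 0)"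
proof
  assume "degree f = m" "m \<ge> 1" "p \<in> A_elems f"
  then show "\<forall>k\<ge>m. coeff p k = 0" by (auto simp: A_elems_def coeff_eq_0)
next
  assume a: "degree f = m" "m \<ge> 1" "\<forall>k\<ge>m. coeff p k = 0"
  then have "degree p \<le> m - 1" by (intro degree_le) auto
  with a show "p \<in> A_elems f" by (auto simp: A_elems_def)
qed

lemma mod_in_A: "f \<noteq> 0 \<Longrightarrow> p mod f \<in> A_elems f"
  using degree_mod_less[of f p] by (auto simp: A_elems_def)

lemma xmod:
  assumes "lead_coeff f = 1" "degree f = m" "m \<ge> 1" "p \<in> A_elems f"
  shows "pCons 0 p mod f = pCons 0 p - smult (coeff p (m - 1)) f"
proof -
  let ?r = "pCons 0 p - smult (coeff p (m - 1)) f"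
  have cp: "\<forall>k\<ge>m. coeff p k = 0" using A_iff assms by blast
  have "\<forall>k\<ge>m. coeff ?r k = 0"
  proof (intro allI impI)
    fix k assume k: "m \<le> k"
    show "coeff ?r k = 0"
    proof (cases "k = m")
      case True
      then show ?thesis using assms by (cases k) auto
    next
      case False
      then have "coeff f k = 0" using k assms by (intro coeff_eq_0) auto
      moreover have "coeff (pCons 0 p) k = 0" using cp k False by (cases k) auto
      ultimately show ?thesis by simp
    qed
  qed
  then have rA: "?r \<in> A_elems f" using A_iff assms by blast
  have "pCons 0 p = ?r + smult (coeff p (m - 1)) f" by simp
  then have "pCons 0 p mod f = (?r + smult (coeff p (m - 1)) f) mod f" by simp
  also have "\<dots> = (?r + [:coeff p (m - 1):] * f) mod f" by simp
  also have "\<dots> = ?r mod f" by (rule mod_mult_self1)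
  also have "\<dots> = ?r" using rA by (auto simp: A_elems_def mod_poly_less)
  finally show ?thesis .
qed

lemma xmod_coeff:
  assumes "lead_coeff f = 1" "degree f = m" "m \<ge> 1" "p \<in> A_elems f"
  shows "coeff (pCons 0 p mod f) j = (if j = 0 then 0 else coeff p (j - 1)) - coeff p (m - 1) * coeff f j"
  using xmod[OF assms] by (cases j) auto


lemma pCons0_mult: "pCons 0 x = [:0,1:] * (x::'a::field poly)" by simp

lemma pCons0_mod: "pCons 0 (x mod f) mod f = pCons 0 x mod f"
  by (metis pCons0_mult mod_mult_right_eq)

lemma smult_in_A: "p \<in> A_elems f \<Longrightarrow> smult c p \<in> A_elems f"
  by (auto simp: A_elems_def)

lemma adj_general:
  assumes "lead_coeff f = 1" "degree f = m" "m \<ge> 1"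
    and H: "\<And>p q. p \<in> A_elems f \<Longrightarrow> q \<in> A_elems f \<Longrightarrow> dot m (pCons 0 p mod f) q = dot m p (s * q mod f)"
  shows "p \<in> A_elems f \<Longrightarrow> q \<in> A_elems f \<Longrightarrow> dot m (a * p mod f) q = dot m p (pcompose a s * q mod f)"
proof (induction a arbitrary: q)
  case 0
  then show ?case by (simp add: pcompose_0)
next
  case (pCons c a)
  have f0: "f \<noteq> 0" using assms by auto
  have pm: "smult c p mod f = smult c p" "smult c q mod f = smult c q"
    using pCons.prems smult_in_A[of _ f c] by (auto simp: A_elems_def mod_poly_less)
  let ?r = "a * p mod f"
  let ?q = "s * q mod f"
  have rA: "?r \<in> A_elems f" "?q \<in> A_elems f" using mod_in_A f0 by auto
  have "pCons c a * p mod f = smult c p + pCons 0 ?r mod f"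
    using pm by (simp add: poly_mod_add_left pCons0_mod)
  then have "dot m (pCons c a * p mod f) q = c * dot m p q + dot m (pCons 0 ?r mod f) q"
    by (simp add: dot_add_left dot_smult_left)
  also have "dot m (pCons 0 ?r mod f) q = dot m ?r ?q" using H rA pCons.prems by blast
  also have "\<dots> = dot m p (pcompose a s * ?q mod f)" using pCons.IH pCons.prems rA by blast
  also have "pcompose a s * ?q mod f = (s * pcompose a s) * q mod f"
    by (simp add: mod_mult_right_eq mult_ac)
  finally have "dot m (pCons c a * p mod f) q = dot m p (smult c q + (s * pcompose a s) * q mod f)"
    by (simp add: dot_add_right dot_smult_right)
  moreover have "pcompose (pCons c a) s * q mod f = smult c q + (s * pcompose a s) * q mod f"
    using pm by (simp add: pcompose_pCons distrib_right poly_mod_add_left)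
  ultimately show ?case by simp
qed


lemma adj_sym:
  assumes "lead_coeff f = 1" "degree f = m" "m = 1 \<or> (m = 2 \<and> coeff f 0 = -1)"
    "p \<in> A_elems f" "q \<in> A_elems f"
  shows "dot m (pCons 0 p mod f) q = dot m p ([:0,1:] * q mod f)"
proof -
  have m1: "m \<ge> 1" using assms by auto
  have "dot m (pCons 0 p mod f) q = (\<Sum>j<m. ((if j = 0 then 0 else coeff p (j - 1)) - coeff p (m - 1) * coeff f j) * coeff q j)"
    by (simp add: dot_def xmod_coeff[OF assms(1,2) m1 assms(4)])
  moreover have "dot m p ([:0,1:] * q mod f) = (\<Sum>j<m. coeff p j * ((if j = 0 then 0 else coeff q (j - 1)) - coeff q (m - 1) * coeff f j))"
    by (simp add: dot_def xmod_coeff[OF assms(1,2) m1 assms(5)])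
  ultimately show ?thesis using assms(3)
    by (auto simp: numeral_2_eq_2 algebra_simps)
qed

lemma orth:
  assumes "lead_coeff f = 1" "degree f = m" "m \<ge> 1" "f = monom 1 m - [:\<sigma>:]" "\<sigma> * \<sigma> = 1"
    "p \<in> A_elems f" "r \<in> A_elems f"
  shows "dot m (pCons 0 p mod f) (pCons 0 r mod f) = dot m p r"
proof -
  have cf: "\<And>j. j < m \<Longrightarrow> coeff f j = (if j = 0 then -\<sigma> else 0)"
    using assms(4) by (auto simp: coeff_monom coeff_pCons split: nat.split)
  obtain n where n: "m = Suc n" using assms(3) by (cases m) auto
  have "dot m (pCons 0 p mod f) (pCons 0 r mod f) =
     (\<Sum>j<Suc n. (if j = 0 then \<sigma> * coeff p n else coeff p (j - 1)) * (if j = 0 then \<sigma> * coeff r n else coeff r (j - 1)))"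
    unfolding dot_def n
    by (intro sum.cong refl) (simp add: xmod_coeff[OF assms(1,2,3,6)] xmod_coeff[OF assms(1,2,3,7)] cf n)
  also have "\<dots> = \<sigma> * \<sigma> * (coeff p n * coeff r n) + (\<Sum>j<n. coeff p j * coeff r j)"
    by (subst sum.lessThan_Suc_shift) (simp add: algebra_simps del: sum.lessThan_Suc)
  also have "\<dots> = dot m p r" using assms(5) by (simp add: dot_def n)
  finally show ?thesis .
qed

lemma adj_orth:
  assumes "lead_coeff f = 1" "degree f = m" "m \<ge> 1" "f = monom 1 m - [:\<sigma>:]" "\<sigma> * \<sigma> = 1"
    "p \<in> A_elems f" "q \<in> A_elems f"
  shows "dot m (pCons 0 p mod f) q = dot m p (smult \<sigma> (monom 1 (m - 1)) * q mod f)"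
proof -
  have f0: "f \<noteq> 0" using assms by auto
  let ?s = "smult \<sigma> (monom 1 (m - 1))"
  let ?r = "?s * q mod f"
  have rA: "?r \<in> A_elems f" using mod_in_A f0 by auto
  have xs: "pCons 0 ?s = smult \<sigma> (monom 1 m)"
    using assms(3) by (cases m) (auto simp: monom_Suc)
  have "pCons 0 (?s * q) = q + f * smult \<sigma> q"
  proof -
    have "pCons 0 (?s * q) = (pCons 0 ?s) * q" by simp
    also have "\<dots> = smult \<sigma> (f + [:\<sigma>:]) * q" using xs assms(4) by simp
    also have "\<dots> = q + f * smult \<sigma> q" using assms(5)
      by (simp add: algebra_simps smult_add_right) 
    finally show ?thesis .
  qed
  note eq = this
  have "pCons 0 ?r mod f = pCons 0 (?s * q) mod f" by (rule pCons0_mod)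
  also have "\<dots> = (q + f * smult \<sigma> q) mod f" using eq by simp
  also have "\<dots> = q mod f" by (metis mod_mult_self1 mult.commute)
  also have "\<dots> = q" using assms(7) by (auto simp: A_elems_def mod_poly_less)
  finally have "pCons 0 ?r mod f = q" .
  then have "dot m (pCons 0 p mod f) q = dot m (pCons 0 p mod f) (pCons 0 ?r mod f)" by simp
  also have "\<dots> = dot m p ?r" using orth[OF assms(1-6) rA] .
  finally show ?thesis .
qed


lemma A_add: "p \<in> A_elems f \<Longrightarrow> q \<in> A_elems f \<Longrightarrow> p + q \<in> A_elems f"
  using degree_add_le_max[of p q] by (auto simp: A_elems_def)

lemma dual_code:
  assumes "lead_coeff f = 1" "degree f = m" "m \<ge> 1"
    and adj: "\<And>a. \<exists>t. \<forall>p\<in>A_elems f. \<forall>q\<in>A_elems f. dot m (a * p mod f) q = dot m p (t * q mod f)"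
    and C: "A_code f l C"
  shows "A_code f l (F_dual f l C)"
proof -
  have f0: "f \<noteq> 0" using assms by auto
  have z: "(\<lambda>i. 0) \<in> F_dual f l C"
    by (simp add: F_dual_def A_vecs_def A_elems_def F_dot_dot)
  have ad: "(\<lambda>i. u i + v i) \<in> F_dual f l C" if u: "u \<in> F_dual f l C" and v: "v \<in> F_dual f l C" for u v
  proof -
    have "(\<lambda>i. u i + v i) \<in> A_vecs f l" using u v by (auto simp: F_dual_def A_vecs_def A_add)
    moreover have "F_dot f l (\<lambda>i. u i + v i) c = 0" if "c \<in> C" for c
      using u v that by (simp add: F_dual_def F_dot_dot dot_add_left sum.distrib)
    ultimately show ?thesis by (simp add: F_dual_def)
  qed
  have sm: "A_smult f a v \<in> F_dual f l C" if a: "a \<in> A_elems f" and v: "v \<in> F_dual f l C" for a v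
  proof -
    obtain t where t: "\<forall>p\<in>A_elems f. \<forall>q\<in>A_elems f. dot m (a * p mod f) q = dot m p (t * q mod f)"
      using adj by blast
    have vA: "v \<in> A_vecs f l" and vd: "\<forall>c\<in>C. F_dot f l v c = 0" using v by (auto simp: F_dual_def)
    have "A_smult f a v \<in> A_vecs f l" using vA mod_in_A[OF f0] by (auto simp: A_vecs_def A_smult_def)
    moreover have "F_dot f l (A_smult f a v) c = 0" if c: "c \<in> C" for c
    proof -
      have cA: "c \<in> A_vecs f l" using C c by (auto simp: A_code_def)
      have tA: "t mod f \<in> A_elems f" using mod_in_A[OF f0] .
      have "F_dot f l (A_smult f a v) c = (\<Sum>i<l. dot m (v i) (t * c i mod f))"
        unfolding F_dot_dot A_smult_def assms(2)
        by (intro sum.cong refl) (use t vA cA in \<open>auto simp: A_vecs_def\<close>)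
      also have "\<dots> = F_dot f l v (A_smult f (t mod f) c)"
        by (simp add: F_dot_dot A_smult_def assms(2) mod_mult_left_eq)
      also have "\<dots> = 0" using vd C c tA by (auto simp: A_code_def)
      finally show ?thesis .
    qed
    ultimately show ?thesis by (simp add: F_dual_def)
  qed
  show ?thesis unfolding A_code_def using z ad sm by (auto simp: F_dual_def)
qed

lemma backward:
  fixes f :: "'a::field poly"
  assumes "lead_coeff f = 1" "degree f = m" "m \<ge> 1"
    and "m = 1 \<or> (m = 2 \<and> (\<exists>a. f = [:-1, a, 1:])) \<or> (m \<ge> 2 \<and> (f = monom 1 m + 1 \<or> f = monom 1 m - 1))"
  shows "A_code f l C \<longrightarrow> A_code f l (F_dual f l C)"
proof
  assume C: "A_code f l C"
  obtain s where H: "\<And>p q. p \<in> A_elems f \<Longrightarrow> q \<in> A_elems f \<Longrightarrow> dot m (pCons 0 p mod f) q = dot m p (s * q mod f)"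
  proof (cases "m = 1 \<or> (m = 2 \<and> coeff f 0 = -1)")
    case True
    show ?thesis by (rule that[of "[:0,1:]"]) (rule adj_sym[OF assms(1,2) True])
  next
    case False
    then have m2: "m \<ge> 2" and fo: "f = monom 1 m + 1 \<or> f = monom 1 m - 1" using assms(4) by auto
    show ?thesis
    proof (cases "f = monom 1 m + 1")
      case True
      then have "f = monom 1 m - [:-1:]" by (simp add: one_pCons)
      show ?thesis by (rule that) (rule adj_orth[OF assms(1,2,3) \<open>f = monom 1 m - [:-1:]\<close>], simp_all)
    next
      case False
      then have "f = monom 1 m - [:1:]" using fo by (simp add: one_pCons)
      show ?thesis by (rule that) (rule adj_orth[OF assms(1,2,3) \<open>f = monom 1 m - [:1:]\<close>], simp_all)
    qed
  qed
  show "A_code f l (F_dual f l C)"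
    by (rule dual_code[OF assms(1,2,3) _ C]) (use adj_general[OF assms(1,2,3) H] in blast)
qed


lemma dot_diff_left: "dot m (p - q) r = dot m p r - dot m q r"
  by (simp add: dot_def left_diff_distrib sum_subtractf)

definition Cx :: "'a::field poly \<Rightarrow> (nat \<Rightarrow> 'a poly) set" where
  "Cx f = {v. v 0 \<in> A_elems f \<and> v 1 = pCons 0 (v 0) mod f \<and> (\<forall>k\<ge>2. v k = 0)}"

lemma Cx_code:
  assumes "lead_coeff f = 1" "degree f = m" "m \<ge> 1"
  shows "A_code f 2 (Cx f)"
proof -
  have f0: "f \<noteq> 0" using assms by auto
  have 1: "Cx f \<subseteq> A_vecs f 2"
  proof
    fix v assume "v \<in> Cx f"
    then show "v \<in> A_vecs f 2" using mod_in_A[OF f0]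
      by (auto simp: Cx_def A_vecs_def less_2_cases_iff)
  qed
  have 2: "(\<lambda>i. 0) \<in> Cx f" by (simp add: Cx_def A_elems_def)
  have 3: "(\<lambda>i. u i + v i) \<in> Cx f" if "u \<in> Cx f" "v \<in> Cx f" for u v
  proof -
    have "pCons 0 (u 0 + v 0) = pCons 0 (u 0) + pCons 0 (v 0)" by simp
    then have "pCons 0 (u 0 + v 0) mod f = pCons 0 (u 0) mod f + pCons 0 (v 0) mod f"
      by (simp only: poly_mod_add_left)
    then show ?thesis using that by (auto simp: Cx_def A_add)
  qed
  have 4: "A_smult f a v \<in> Cx f" if "a \<in> A_elems f" "v \<in> Cx f" for a v
  proof -
    have "a * (pCons 0 (v 0) mod f) mod f = pCons 0 (a * v 0 mod f) mod f"
      by (simp add: mod_mult_right_eq pCons0_mod)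
    then show ?thesis using that mod_in_A[OF f0] by (auto simp: Cx_def A_smult_def)
  qed
  show ?thesis unfolding A_code_def using 1 2 3 4 by blast
qed

lemma F_dot2: "F_dot f 2 v w = dot (degree f) (v 0) (w 0) + dot (degree f) (v 1) (w 1)"
  by (simp add: F_dot_dot numeral_2_eq_2)

definition uu :: "'a::field poly \<Rightarrow> nat \<Rightarrow> nat \<Rightarrow> 'a poly" where
  "uu f m i = smult (coeff f i) (monom 1 (m - 1)) - (if i \<ge> 1 then monom 1 (i - 1) else 0)"

lemma coeff_uu: "coeff (uu f m i) k = (if k = m - 1 then coeff f i else 0) - (if i \<ge> 1 \<and> k = i - 1 then 1 else 0)"
  by (simp add: uu_def coeff_monom)

lemma E:
  assumes "lead_coeff f = 1" "degree f = m" "m \<ge> 2"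
    and P: "\<forall>l C. A_code f l C \<longrightarrow> A_code f l (F_dual f l C)"
    and "i < m" "j < m"
  shows "coeff (pCons 0 (uu f m i) mod f) j
     + dot m (pCons 0 (monom 1 i) mod f) (pCons 0 (monom 1 j) mod f) = 0"
proof -
  have m1: "m \<ge> 1" using assms by auto
  have f0: "f \<noteq> 0" using assms by auto
  have D: "A_code f 2 (F_dual f 2 (Cx f))" using P Cx_code[OF assms(1,2) m1] by blast
  have uA: "uu f m i \<in> A_elems f"
    unfolding A_iff[OF assms(2) m1] coeff_uu using assms(5) m1 by auto
  have miA: "monom 1 k \<in> A_elems f" if "k < m" for k using that assms(2) by (auto simp: A_elems_def degree_monom_eq)
  define V where "V = (\<lambda>k::nat. if k = 0 then uu f m i else if k = 1 then monom 1 i else (0::'a poly))"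
  have VD: "V \<in> F_dual f 2 (Cx f)"
  proof -
    have "V \<in> A_vecs f 2" using uA miA[OF assms(5)] by (auto simp: V_def A_vecs_def less_2_cases_iff)
    moreover have "F_dot f 2 V w = 0" if w: "w \<in> Cx f" for w
    proof -
      have w0: "w 0 \<in> A_elems f" and w1: "w 1 = pCons 0 (w 0) mod f" using w by (auto simp: Cx_def)
      have a: "dot m (uu f m i) (w 0) = coeff f i * coeff (w 0) (m - 1) - (if i \<ge> 1 then coeff (w 0) (i - 1) else 0)"
        using m1 assms(5) by (simp add: uu_def dot_diff_left dot_smult_left dot_monom_left)
      have b: "dot m (monom 1 i) (pCons 0 (w 0) mod f) = (if i = 0 then 0 else coeff (w 0) (i - 1)) - coeff (w 0) (m - 1) * coeff f i"
        using assms(5) by (simp add: dot_monom_left xmod_coeff[OF assms(1,2) m1 w0])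
      show ?thesis using a b w1 by (simp add: F_dot2 assms(2) V_def)
    qed
    ultimately show ?thesis by (simp add: F_dual_def)
  qed
  have xA: "[:0,1:] \<in> A_elems f" using assms by (simp add: A_elems_def)
  have VD2: "A_smult f [:0,1:] V \<in> F_dual f 2 (Cx f)" using D VD xA by (auto simp: A_code_def)
  define W where "W = (\<lambda>k::nat. if k = 0 then monom 1 j else if k = 1 then pCons 0 (monom 1 j) mod f else (0::'a poly))"
  have WC: "W \<in> Cx f" using miA[OF assms(6)] by (simp add: W_def Cx_def)
  have "F_dot f 2 (A_smult f [:0,1:] V) W = 0" using VD2 WC by (auto simp: F_dual_def)
  then show ?thesis
    using assms(6) by (simp add: F_dot2 A_smult_def V_def W_def assms(2) dot_monom_right)
qed


lemma uu_A: "degree f = m \<Longrightarrow> m \<ge> 1 \<Longrightarrow> i < m \<Longrightarrow> uu f m i \<in> A_elems f"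
  unfolding A_iff coeff_uu by auto

lemma xmonom: "degree f = m \<Longrightarrow> Suc k < m \<Longrightarrow> pCons 0 (monom (1::'a::field) k) mod f = monom 1 (Suc k)"
  by (metis degree_monom_eq monom_Suc mod_poly_less one_neq_zero)

lemma forward:
  fixes f :: "'a::field poly"
  assumes "lead_coeff f = 1" "degree f = m" "m \<ge> 2"
    and P: "\<forall>l C. A_code f l C \<longrightarrow> A_code f l (F_dual f l C)"
  shows "(m = 2 \<and> (\<exists>a. f = [:-1, a, 1:])) \<or> f = monom 1 m + 1 \<or> f = monom 1 m - 1"
proof -
  have m1: "m \<ge> 1" using assms by auto
  have e00: "coeff f 0 * coeff f 0 = 1"
  proof -
    have "coeff (pCons 0 (uu f m 0) mod f) 0 + dot m (pCons 0 (monom 1 0) mod f) (pCons 0 (monom 1 0) mod f) = 0"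
      using E[OF assms, of 0 0] assms by simp
    moreover have "pCons 0 (monom 1 0) mod f = monom (1::'a) 1" using xmonom[OF assms(2), of 0] assms by simp
    ultimately show ?thesis using assms uu_A[OF assms(2) m1, of 0]
      by (simp add: xmod_coeff[OF assms(1,2) m1] coeff_uu dot_monom_left)
  qed
  have eii: "coeff f i = 0" if "1 \<le> i" "Suc i < m" for i
  proof -
    have "coeff (pCons 0 (uu f m i) mod f) i + dot m (pCons 0 (monom 1 i) mod f) (pCons 0 (monom 1 i) mod f) = 0"
      using E[OF assms, of i i] that by simp
    moreover have "pCons 0 (monom 1 i) mod f = monom (1::'a) (Suc i)" using xmonom[OF assms(2), of i] that by simp
    moreover have "i - Suc 0 \<noteq> m - Suc 0" "m - Suc 0 \<noteq> i - Suc 0" using that by arith+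
    ultimately have "coeff f i * coeff f i = 0" using that uu_A[OF assms(2) m1, of i]
      by (simp add: xmod_coeff[OF assms(1,2) m1] coeff_uu dot_monom_left)
    then show ?thesis by simp
  qed
  have e0m: "coeff f 0 * coeff f (m - 1) = - coeff f 1"
  proof -
    have "coeff (pCons 0 (uu f m 0) mod f) (m - 1) + dot m (pCons 0 (monom 1 0) mod f) (pCons 0 (monom 1 (m - 1)) mod f) = 0"
      using E[OF assms, of 0 "m - 1"] assms by simp
    moreover have "pCons 0 (monom 1 0) mod f = monom (1::'a) 1" using xmonom[OF assms(2), of 0] assms by simp
    moreover have "monom 1 (m - 1) \<in> A_elems f" using assms by (simp add: A_elems_def degree_monom_eq)
    moreover have "m - Suc (Suc 0) \<noteq> m - Suc 0" using assms by arith
    ultimately have "- coeff f 1 = coeff f 0 * coeff f (m - 1)" using assms uu_A[OF assms(2) m1, of 0]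
      by (simp add: xmod_coeff[OF assms(1,2) m1] coeff_uu dot_monom_left coeff_monom algebra_simps)
    then show ?thesis by simp
  qed
  have cfk: "\<And>k. k > m \<Longrightarrow> coeff f k = 0" using assms(2) by (simp add: coeff_eq_0)
  have cfm: "coeff f m = 1" using assms by simp
  have c0: "coeff f 0 = 1 \<or> coeff f 0 = -1" using e00 square_eq_1_iff by blast
  show ?thesis
  proof (cases "m = 2")
    case True
    have f2: "f = [:coeff f 0, coeff f 1, 1:]"
    proof (rule poly_eqI)
      fix k show "coeff f k = coeff [:coeff f 0, coeff f 1, 1:] k"
        using cfk cfm True by (auto simp: coeff_pCons numeral_2_eq_2 split: nat.split)
    qed
    have e: "coeff f 0 * coeff f 1 = - coeff f 1" using e0m True by simp
    show ?thesis
    proof (cases "coeff f 0 = -1")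
      case True
      then show ?thesis using f2 \<open>m = 2\<close> by metis
    next
      case False
      then have c01: "coeff f 0 = 1" using c0 by blast
      then have "coeff f 1 * (1 + 1) = 0" using e by (simp add: algebra_simps eq_neg_iff_add_eq_0)
      then have "coeff f 1 = 0 \<or> (1::'a) + 1 = 0" by simp
      moreover have "(1::'a) + 1 \<noteq> 0" using False c01 by (metis add_eq_0_iff)
      ultimately have "coeff f 1 = 0" by blast
      then have "f = monom 1 m + 1" using f2 c01 \<open>m = 2\<close>
        by (auto intro!: poly_eqI simp: coeff_pCons coeff_monom numeral_2_eq_2 split: nat.split)
      then show ?thesis by blast
    qed
  next
    case False
    then have m3: "m \<ge> 3" using assms by arith
    have c1: "coeff f 1 = 0" using eii[of 1] m3 by simp
    have c0n: "coeff f 0 \<noteq> 0" using e00 by auto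
    have cm1: "coeff f (m - 1) = 0" using e0m c1 c0n by simp
    have cmid: "coeff f k = 0" if "1 \<le> k" "k < m" for k
    proof (cases "k = m - 1")
      case True then show ?thesis using cm1 by simp
    next
      case False then show ?thesis using eii[of k] that by arith
    qed
    have "f = monom 1 m + [:coeff f 0:]"
    proof (rule poly_eqI)
      fix k show "coeff f k = coeff (monom 1 m + [:coeff f 0:]) k"
        using cfk cfm cmid m3 by (cases "k = 0"; cases "k < m"; cases "k = m")
          (auto simp: coeff_monom coeff_pCons split: nat.split)
    qed
    then show ?thesis using c0 by (auto simp: one_pCons)
  qed
qed

theorem mainTheorem13:
  fixes f :: "'a::{finite,field} poly" and m :: nat
  assumes "lead_coeff f = 1" and "degree f = m" and "m \<ge> 1"
  shows "(\<forall>l C. A_code f l C \<longrightarrow> A_code f l (F_dual f l C)) \<longleftrightarrow>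
    (m = 1 \<or> (m = 2 \<and> (\<exists>a. f = [:-1, a, 1:])) \<or>
     (m \<ge> 2 \<and> (f = monom 1 m + 1 \<or> f = monom 1 m - 1)))"
proof
  assume P: "\<forall>l C. A_code f l C \<longrightarrow> A_code f l (F_dual f l C)"
  show "m = 1 \<or> (m = 2 \<and> (\<exists>a. f = [:-1, a, 1:])) \<or> (m \<ge> 2 \<and> (f = monom 1 m + 1 \<or> f = monom 1 m - 1))"
  proof (cases "m = 1")
    case False
    then have "m \<ge> 2" using assms by arith
    then show ?thesis using forward[OF assms(1,2) _ P] by blast
  qed simp
next
  assume "m = 1 \<or> (m = 2 \<and> (\<exists>a. f = [:-1, a, 1:])) \<or> (m \<ge> 2 \<and> (f = monom 1 m + 1 \<or> f = monom 1 m - 1))"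
  then show "\<forall>l C. A_code f l C \<longrightarrow> A_code f l (F_dual f l C)"
    using backward[OF assms] by blast
qed

end
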